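(* Let $(S_1,S_2,P)$ be a $\Gamma_3$-contraction. Then for $i=1,2$, all $\alpha\in\overline{\mathbb D}$ and all $k\ge3$, $\Phi_{ik}(\alpha S_1,\alpha^2S_2,\alpha^3P)\ge0$.
   Context: $\Gamma_3=\{(z_1+z_2+z_3,\,z_1z_2+z_2z_3+z_3z_1,\,z_1z_2z_3):|z_i|\le1\}$. A $\Gamma_3$-contraction is a commuting operator triple with Taylor joint spectrum in $\Gamma_3$ and $\|f(S_1,S_2,P)\|\le\sup_{\Gamma_3}|f|$ for rational $f$ with poles off $\Gamma_3$. For a commuting triple and $k\ge3$: $\Phi_{1k}(S_1,S_2,P)=(k-S_1)^*(k-S_1)-(kP-S_2)^*(kP-S_2)$, $\Phi_{2k}(S_1,S_2,P)=(k-S_2)^*(k-S_2)-(kP-S_1)^*(kP-S_1)$. *)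

theory Defs
  imports "HOL-Analysis.Analysis"
begin

class complex_hilbert = banach +
  fixes scaleC :: "complex \<Rightarrow> 'a \<Rightarrow> 'a"
    and cinner :: "'a \<Rightarrow> 'a \<Rightarrow> complex"
  assumes scaleC_add_right: "scaleC a (x + y) = scaleC a x + scaleC a y"
    and scaleC_add_left: "scaleC (a + b) x = scaleC a x + scaleC b x"
    and scaleC_scaleC: "scaleC a (scaleC b x) = scaleC (a * b) x"
    and scaleC_one: "scaleC 1 x = x"
    and scaleC_of_real: "scaleC (of_real r) x = scaleR r x"
    and cinner_add_left: "cinner (x + y) z = cinner x z + cinner y z"
    and cinner_scaleC_left: "cinner (scaleC a x) y = cnj a * cinner x y"
    and cinner_commute: "cinner y x = cnj (cinner x y)"
    and cinner_self_norm: "cinner x x = complex_of_real ((norm x)\<^sup>2)"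

definition bounded_op :: "('a::complex_hilbert \<Rightarrow> 'a) \<Rightarrow> bool" where
  "bounded_op T \<longleftrightarrow> bounded_linear T \<and> (\<forall>c x. T (scaleC c x) = scaleC c (T x))"

text \<open>Hilbert-space adjoint (exists uniquely for bounded operators by Riesz).\<close>
definition adj :: "('a::complex_hilbert \<Rightarrow> 'a) \<Rightarrow> ('a \<Rightarrow> 'a)" where
  "adj T = (SOME S. \<forall>x y. cinner (T x) y = cinner x (S y))"

definition positive_op :: "('a::complex_hilbert \<Rightarrow> 'a) \<Rightarrow> bool" where
  "positive_op A \<longleftrightarrow> (\<forall>x. cinner x (A x) \<in> \<real> \<and> 0 \<le> Re (cinner x (A x)))"

definition commuting3 :: "('a \<Rightarrow> 'a) \<Rightarrow> ('a \<Rightarrow> 'a) \<Rightarrow> ('a \<Rightarrow> 'a) \<Rightarrow> bool" where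
  "commuting3 A B C \<longleftrightarrow> A \<circ> B = B \<circ> A \<and> A \<circ> C = C \<circ> A \<and> B \<circ> C = C \<circ> B"

definition koszul_d1 :: "('a::complex_hilbert \<Rightarrow> 'a) \<Rightarrow> ('a \<Rightarrow> 'a) \<Rightarrow> ('a \<Rightarrow> 'a)
    \<Rightarrow> 'a \<Rightarrow> 'a \<times> 'a \<times> 'a" where
  "koszul_d1 A B C x = (A x, B x, C x)"

definition koszul_d2 :: "('a::complex_hilbert \<Rightarrow> 'a) \<Rightarrow> ('a \<Rightarrow> 'a) \<Rightarrow> ('a \<Rightarrow> 'a)
    \<Rightarrow> 'a \<times> 'a \<times> 'a \<Rightarrow> 'a \<times> 'a \<times> 'a" where
  "koszul_d2 A B C v = (case v of (x1, x2, x3) \<Rightarrow>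
      (A x2 - B x1, A x3 - C x1, B x3 - C x2))"

definition koszul_d3 :: "('a::complex_hilbert \<Rightarrow> 'a) \<Rightarrow> ('a \<Rightarrow> 'a) \<Rightarrow> ('a \<Rightarrow> 'a)
    \<Rightarrow> 'a \<times> 'a \<times> 'a \<Rightarrow> 'a" where
  "koszul_d3 A B C v = (case v of (y12, y13, y23) \<Rightarrow> A y23 - B y13 + C y12)"

definition koszul_exact :: "('a::complex_hilbert \<Rightarrow> 'a) \<Rightarrow> ('a \<Rightarrow> 'a) \<Rightarrow> ('a \<Rightarrow> 'a) \<Rightarrow> bool" where
  "koszul_exact A B C \<longleftrightarrow>
     inj (koszul_d1 A B C)
   \<and> {v. koszul_d2 A B C v = 0} = range (koszul_d1 A B C)
   \<and> {v. koszul_d3 A B C v = 0} = range (koszul_d2 A B C)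
   \<and> surj (koszul_d3 A B C)"

definition shift_op :: "('a::complex_hilbert \<Rightarrow> 'a) \<Rightarrow> complex \<Rightarrow> 'a \<Rightarrow> 'a" where
  "shift_op T lam x = T x - scaleC lam x"

definition taylor_spectrum :: "('a::complex_hilbert \<Rightarrow> 'a) \<Rightarrow> ('a \<Rightarrow> 'a) \<Rightarrow> ('a \<Rightarrow> 'a)
    \<Rightarrow> (complex \<times> complex \<times> complex) set" where
  "taylor_spectrum A B C =
     {(l1, l2, l3). \<not> koszul_exact (shift_op A l1) (shift_op B l2) (shift_op C l3)}"

definition Gamma3 :: "(complex \<times> complex \<times> complex) set" where
  "Gamma3 = {(z1 + z2 + z3, z1 * z2 + z2 * z3 + z3 * z1, z1 * z2 * z3) | z1 z2 z3.
               cmod z1 \<le> 1 \<and> cmod z2 \<le> 1 \<and> cmod z3 \<le> 1}"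

text \<open>Polynomials in three complex variables, given by a coefficient function and a
degree bound \<open>N\<close> (every polynomial in three variables arises this way).\<close>

definition poly3 :: "(nat \<Rightarrow> nat \<Rightarrow> nat \<Rightarrow> complex) \<Rightarrow> nat
    \<Rightarrow> complex \<times> complex \<times> complex \<Rightarrow> complex" where
  "poly3 c N z = (case z of (z1, z2, z3) \<Rightarrow>
      (\<Sum>i\<le>N. \<Sum>j\<le>N. \<Sum>l\<le>N. c i j l * z1 ^ i * z2 ^ j * z3 ^ l))"

definition poly3_op :: "(nat \<Rightarrow> nat \<Rightarrow> nat \<Rightarrow> complex) \<Rightarrow> nat
    \<Rightarrow> ('a::complex_hilbert \<Rightarrow> 'a) \<Rightarrow> ('a \<Rightarrow> 'a) \<Rightarrow> ('a \<Rightarrow> 'a) \<Rightarrow> 'a \<Rightarrow> 'a" where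
  "poly3_op c N A B C x =
      (\<Sum>i\<le>N. \<Sum>j\<le>N. \<Sum>l\<le>N. scaleC (c i j l) ((A ^^ i) ((B ^^ j) ((C ^^ l) x))))"

text \<open>A rational function with poles off Gamma_3 is \<open>p/q\<close> with \<open>q\<close> nonvanishing on
Gamma_3; its value at the triple is \<open>p(S_1,S_2,P) q(S_1,S_2,P)^{-1}\<close> (the inverse
exists by the spectral mapping theorem since the Taylor spectrum lies in Gamma_3).\<close>

definition gamma3_contraction :: "('a::complex_hilbert \<Rightarrow> 'a) \<Rightarrow> ('a \<Rightarrow> 'a) \<Rightarrow> ('a \<Rightarrow> 'a) \<Rightarrow> bool" where
  "gamma3_contraction S1 S2 P \<longleftrightarrow>
     bounded_op S1 \<and> bounded_op S2 \<and> bounded_op P \<and> commuting3 S1 S2 P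
   \<and> taylor_spectrum S1 S2 P \<subseteq> Gamma3
   \<and> (\<forall>p q N. (\<forall>z\<in>Gamma3. poly3 q N z \<noteq> 0) \<longrightarrow>
        onorm (poly3_op p N S1 S2 P \<circ> inv (poly3_op q N S1 S2 P))
          \<le> (SUP z\<in>Gamma3. cmod (poly3 p N z / poly3 q N z)))"

definition op_comb :: "complex \<Rightarrow> ('a::complex_hilbert \<Rightarrow> 'a) \<Rightarrow> ('a \<Rightarrow> 'a) \<Rightarrow> 'a \<Rightarrow> 'a" where
  "op_comb k T U x = scaleC k (T x) - U x"

definition Phi1 :: "real \<Rightarrow> ('a::complex_hilbert \<Rightarrow> 'a) \<Rightarrow> ('a \<Rightarrow> 'a) \<Rightarrow> ('a \<Rightarrow> 'a) \<Rightarrow> 'a \<Rightarrow> 'a" where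
  "Phi1 k S1 S2 P x =
     adj (op_comb (of_real k) id S1) (op_comb (of_real k) id S1 x)
   - adj (op_comb (of_real k) P S2) (op_comb (of_real k) P S2 x)"

definition Phi2 :: "real \<Rightarrow> ('a::complex_hilbert \<Rightarrow> 'a) \<Rightarrow> ('a \<Rightarrow> 'a) \<Rightarrow> ('a \<Rightarrow> 'a) \<Rightarrow> 'a \<Rightarrow> 'a" where
  "Phi2 k S1 S2 P x =
     adj (op_comb (of_real k) id S2) (op_comb (of_real k) id S2 x)
   - adj (op_comb (of_real k) P S1) (op_comb (of_real k) P S1 x)"

definition scale_op :: "complex \<Rightarrow> ('a::complex_hilbert \<Rightarrow> 'a) \<Rightarrow> 'a \<Rightarrow> 'a" where
  "scale_op a T x = scaleC a (T x)"

end

theory Submission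
  imports Defs "HOL-Complex_Analysis.Complex_Analysis"
begin


declare [[show_sorts=false]]

lemma scaleC_zero_left[simp]: "scaleC 0 x = 0"
  using scaleC_of_real[of 0 x] by simp

lemma scaleC_zero_right[simp]: "scaleC a 0 = 0"
  using scaleC_add_right[of a 0 0] by simp

lemma scaleC_minus_right: "scaleC a (- x) = - scaleC a x"
  using scaleC_add_right[of a "-x" x] by (simp add: eq_neg_iff_add_eq_0)

lemma scaleC_diff_right: "scaleC a (x - y) = scaleC a x - scaleC a y"
  using scaleC_add_right[of a x "-y"] scaleC_minus_right by simp

lemma scaleC_minus_left: "scaleC (- a) x = - scaleC a x"
  using scaleC_add_left[of "-a" a x] by (simp add: eq_neg_iff_add_eq_0)

lemma scaleC_diff_left: "scaleC (a - b) x = scaleC a x - scaleC b x"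
  using scaleC_add_left[of a "-b" x] scaleC_minus_left by simp

lemma scaleC_sum_right: "scaleC a (sum f A) = (\<Sum>i\<in>A. scaleC a (f i))"
  by (induction A rule: infinite_finite_induct) (auto simp: scaleC_add_right)

lemma scaleC_sum_left: "scaleC (sum f A) x = (\<Sum>i\<in>A. scaleC (f i) x)"
  by (induction A rule: infinite_finite_induct) (auto simp: scaleC_add_left)

lemma scaleR_scaleC: "scaleR r x = scaleC (of_real r) x"
  by (simp add: scaleC_of_real)

lemma cinner_zero_left[simp]: "cinner 0 y = 0"
  using cinner_add_left[of 0 0 y] by simp

lemma cinner_zero_right[simp]: "cinner x 0 = 0"
  using cinner_commute[of 0 x] by simp

lemma cinner_add_right: "cinner x (y + z) = cinner x y + cinner x z"
proof -
  have "cnj (cinner x (y + z)) = cnj (cinner x y + cinner x z)"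
    using cinner_commute[of x "y+z"] cinner_commute[of x y] cinner_commute[of x z]
    by (simp add: cinner_add_left)
  then show ?thesis by (metis complex_cnj_cnj)
qed

lemma cinner_scaleC_right: "cinner x (scaleC a y) = a * cinner x y"
proof -
  have "cnj (cinner x (scaleC a y)) = cnj (a * cinner x y)"
    using cinner_commute[of x "scaleC a y"] cinner_commute[of x y]
    by (simp add: cinner_scaleC_left)
  then show ?thesis by (metis complex_cnj_cnj)
qed

lemma cinner_minus_left: "cinner (- x) y = - cinner x y"
  using cinner_add_left[of "-x" x y] by (simp add: eq_neg_iff_add_eq_0)

lemma cinner_minus_right: "cinner x (- y) = - cinner x y"
  using cinner_add_right[of x "-y" y] by (simp add: eq_neg_iff_add_eq_0)

lemma cinner_diff_left: "cinner (x - y) z = cinner x z - cinner y z"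
  using cinner_add_left[of x "-y" z] cinner_minus_left by simp

lemma cinner_diff_right: "cinner x (y - z) = cinner x y - cinner x z"
  using cinner_add_right[of x y "-z"] cinner_minus_right by simp

lemma cinner_self_norm': "(complex_of_real (norm x))\<^sup>2 = cinner x x"
  by (simp add: cinner_self_norm)

lemma norm_scaleC: "norm (scaleC a x) = cmod a * norm x"
proof -
  have "complex_of_real ((norm (scaleC a x))\<^sup>2) = cnj a * a * complex_of_real ((norm x)\<^sup>2)"
    by (simp add: cinner_self_norm' cinner_scaleC_left cinner_scaleC_right)
  also have "cnj a * a = complex_of_real ((cmod a)\<^sup>2)"
    by (metis complex_norm_square mult.commute)
  finally have "(norm (scaleC a x))\<^sup>2 = ((cmod a) * norm x)\<^sup>2"
    by (simp only: of_real_mult[symmetric] of_real_eq_iff power_mult_distrib)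
  then show ?thesis by (simp add: power2_eq_iff_nonneg)
qed

lemma bounded_linear_scaleC: "bounded_linear (scaleC a)"
proof
  show "scaleC a (x + y) = scaleC a x + scaleC a y" for x y by (rule scaleC_add_right)
  show "scaleC a (scaleR r x) = scaleR r (scaleC a x)" for r x
    by (simp add: scaleR_scaleC scaleC_scaleC mult.commute)
  show "\<exists>K. \<forall>x. norm (scaleC a x) \<le> norm x * K"
    by (rule exI[of _ "cmod a"]) (simp add: norm_scaleC mult.commute)
qed

lemma cinner_self_Re: "Re (cinner x x) = (norm x)\<^sup>2"
  by (simp add: cinner_self_norm)

lemma norm_diff_sq: "(complex_of_real (norm (x - y)))\<^sup>2 =
   (complex_of_real (norm x))\<^sup>2 - cinner x y - cinner y x + (complex_of_real (norm y))\<^sup>2"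
  by (simp add: cinner_self_norm' cinner_diff_left cinner_diff_right)

lemma norm_add_sq: "(complex_of_real (norm (x + y)))\<^sup>2 =
   (complex_of_real (norm x))\<^sup>2 + cinner x y + cinner y x + (complex_of_real (norm y))\<^sup>2"
  by (simp add: cinner_self_norm' cinner_add_left cinner_add_right)

lemma parallelogram: fixes x y :: "'a::complex_hilbert" shows "(norm (x + y))\<^sup>2 + (norm (x - y))\<^sup>2 = 2 * (norm x)\<^sup>2 + 2 * (norm y)\<^sup>2"
proof -
  have "(complex_of_real (norm (x + y)))\<^sup>2 + (complex_of_real (norm (x - y)))\<^sup>2 =
     2 * (complex_of_real (norm x))\<^sup>2 + 2 * (complex_of_real (norm y))\<^sup>2"
    using norm_add_sq[of x y] norm_diff_sq[of x y] by (simp add: algebra_simps)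
  then have "complex_of_real ((norm (x + y))\<^sup>2 + (norm (x - y))\<^sup>2) = complex_of_real (2 * (norm x)\<^sup>2 + 2 * (norm y)\<^sup>2)"
    by simp
  then show ?thesis by (simp only: of_real_eq_iff)
qed

lemma cauchy_schwarz: "cmod (cinner x y) \<le> norm x * norm y"
proof (cases "y = 0")
  case True then show ?thesis by simp
next
  case False
  define n where "n = (norm y)\<^sup>2"
  have n: "n > 0" using False by (simp add: n_def)
  define c where "c = cinner y x"
  define t where "t = c / complex_of_real n"
  have cxy: "cinner x y = cnj c" by (simp add: c_def cinner_commute[of x y])
  have "complex_of_real ((norm (x - scaleC t y))\<^sup>2) =
     complex_of_real ((norm x)\<^sup>2) - t * cnj c - cnj t * c + cnj t * t * complex_of_real n"
    by (simp add: cinner_self_norm' cinner_diff_left cinner_diff_right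
        cinner_scaleC_left cinner_scaleC_right cxy c_def n_def algebra_simps)
  also have "\<dots> = complex_of_real ((norm x)\<^sup>2 - (cmod c)\<^sup>2 / n)"
  proof -
    have cc: "cnj c * c = complex_of_real ((cmod c)\<^sup>2)"
      by (metis complex_norm_square mult.commute)
    have cc2: "c * cnj c = complex_of_real ((cmod c)\<^sup>2)"
      by (metis complex_norm_square)
    have nz: "complex_of_real n \<noteq> 0" using n by simp
    have "t * cnj c = complex_of_real ((cmod c)\<^sup>2 / n)" unfolding t_def using cc2 by simp
    moreover have "cnj t * c = complex_of_real ((cmod c)\<^sup>2 / n)" unfolding t_def using cc by simp
    moreover have "cnj t * t * complex_of_real n = complex_of_real ((cmod c)\<^sup>2 / n)"
      unfolding t_def using cc nz by (simp add: power2_eq_square)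
    ultimately show ?thesis by simp
  qed
  finally have "(norm (x - scaleC t y))\<^sup>2 = (norm x)\<^sup>2 - (cmod c)\<^sup>2 / n"
    by (simp only: of_real_eq_iff)
  then have "(norm x)\<^sup>2 - (cmod c)\<^sup>2 / n \<ge> 0"
    by (metis zero_le_power2)
  then have "(cmod c)\<^sup>2 \<le> (norm x)\<^sup>2 * n" using n by (simp add: field_simps)
  then have "(cmod c)\<^sup>2 \<le> (norm x * norm y)\<^sup>2" by (simp add: n_def power_mult_distrib)
  then have "cmod c \<le> norm x * norm y"
    using power2_le_imp_le by fastforce
  then show ?thesis using cxy by simp
qed


lemma norm_diff_scaleC_sq:
  fixes v n :: "'a::complex_hilbert"
  shows "(norm (v - scaleC t n))\<^sup>2 = (norm v)\<^sup>2 - 2 * Re (t * cinner v n) + (cmod t)\<^sup>2 * (norm n)\<^sup>2"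
proof -
  have "(norm (v - scaleC t n))\<^sup>2 = Re (cinner (v - scaleC t n) (v - scaleC t n))"
    by (simp add: cinner_self_Re)
  also have "cinner (v - scaleC t n) (v - scaleC t n) =
     cinner v v - t * cinner v n - cnj t * cnj (cinner v n) + (cnj t * t) * cinner n n"
    by (simp add: cinner_diff_left cinner_diff_right cinner_scaleC_left cinner_scaleC_right
        cinner_commute[of n v] algebra_simps)
  also have "Re (cinner v v - t * cinner v n - cnj t * cnj (cinner v n) + (cnj t * t) * cinner n n)
     = (norm v)\<^sup>2 - 2 * Re (t * cinner v n) + (cmod t)\<^sup>2 * (norm n)\<^sup>2"
  proof -
    have "cnj t * t = complex_of_real ((cmod t)\<^sup>2)" by (metis complex_norm_square mult.commute)
    moreover have "Re (cnj t * cnj (cinner v n)) = Re (t * cinner v n)"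
      by simp
    ultimately show ?thesis by (simp add: cinner_self_norm)
  qed
  finally show ?thesis .
qed

lemma riesz:
  fixes f :: "'a::complex_hilbert \<Rightarrow> complex"
  assumes add: "\<And>x y. f (x + y) = f x + f y"
    and sc: "\<And>c x. f (scaleC c x) = c * f x"
    and bd: "\<And>x. cmod (f x) \<le> K * norm x"
  shows "\<exists>z. \<forall>x. f x = cinner z x"
proof (cases "\<forall>x. f x = 0")
  case True then show ?thesis by (intro exI[of _ 0]) simp
next
  case False
  then obtain u where fu: "f u \<noteq> 0" by blast
  have f0: "f 0 = 0" using sc[of 0 0] by simp
  have fdiff: "f (x - y) = f x - f y" for x y
    using add[of "x - y" y] by simp
  have fR: "f (scaleR r x) = of_real r * f x" for r x
    by (simp add: scaleR_scaleC sc)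
  define N where "N = {x. f x = 0}"
  define D where "D = (\<lambda>n. norm (u - n)) ` N"
  define d where "d = Inf D"
  have D0: "D \<noteq> {}" using f0 by (auto simp: D_def N_def)
  have Dbdd: "bdd_below D" by (auto simp: D_def intro!: bdd_belowI[of _ 0])
  have dle: "d \<le> norm (u - n)" if "n \<in> N" for n
    unfolding d_def using that Dbdd by (auto simp: D_def intro!: cInf_lower)
  have d0: "0 \<le> d" using dle[of 0] f0 unfolding N_def
    by (metis (mono_tags, lifting) D0 Dbdd cInf_greatest d_def D_def image_iff norm_ge_zero)
  have "\<exists>n\<in>N. norm (u - n) < d + 1 / (real j + 1)" for j
  proof -
    have "Inf D < d + 1 / (real j + 1)" unfolding d_def by (simp add: add_pos_pos)
    from cInf_lessD[OF D0 this] show ?thesis by (auto simp: D_def)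
  qed
  then obtain s where sN: "\<And>j. s j \<in> N" and sd: "\<And>j. norm (u - s j) < d + 1 / (real j + 1)"
    by metis
  have key: "(norm (s i - s j))\<^sup>2 \<le> (4 * d + 2) * (1 / (real i + 1) + 1 / (real j + 1))" for i j
  proof -
    define a where "a = u - s i"
    define b where "b = u - s j"
    define m where "m = scaleR (1/2) (s i + s j)"
    have mN: "m \<in> N" using sN[of i] sN[of j] by (simp add: N_def m_def fR add)
    have ab: "a + b = scaleR 2 (u - m)" by (simp add: a_def b_def m_def algebra_simps scaleR_2)
    have "2 * d \<le> norm (a + b)" using dle[OF mN] by (simp add: ab)
    then have "(2 * d)\<^sup>2 \<le> (norm (a + b))\<^sup>2" using d0 by (intro power_mono) auto
    then have "4 * d\<^sup>2 \<le> (norm (a + b))\<^sup>2" by (simp add: power_mult_distrib)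
    have par: "(norm (a + b))\<^sup>2 + (norm (s i - s j))\<^sup>2 = 2 * (norm a)\<^sup>2 + 2 * (norm b)\<^sup>2"
      using parallelogram[of a b] norm_minus_commute[of "s j" "s i"] by (simp add: a_def b_def)
    define ei where "ei = 1 / (real i + 1)"
    define ej where "ej = 1 / (real j + 1)"
    have na: "(norm a)\<^sup>2 \<le> (d + ei)\<^sup>2"
      using sd[of i] unfolding a_def ei_def by (intro power_mono) auto
    have nb: "(norm b)\<^sup>2 \<le> (d + ej)\<^sup>2"
      using sd[of j] unfolding b_def ej_def by (intro power_mono) auto
    have eb: "ei \<le> 1" "ej \<le> 1" "ei \<ge> 0" "ej \<ge> 0" by (auto simp: ei_def ej_def)
    have "(norm (s i - s j))\<^sup>2 \<le> 2 * (d + ei)\<^sup>2 + 2 * (d + ej)\<^sup>2 - 4 * d\<^sup>2"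
      using par na nb \<open>4 * d\<^sup>2 \<le> (norm (a + b))\<^sup>2\<close> by linarith
    also have "\<dots> = 4 * d * (ei + ej) + 2 * ei * ei + 2 * ej * ej"
      by (simp add: power2_eq_square algebra_simps)
    also have "\<dots> \<le> (4 * d + 2) * (ei + ej)"
    proof -
      have "ei * ei \<le> ei" "ej * ej \<le> ej" using eb by (auto intro: mult_left_le)
      then show ?thesis by (simp add: algebra_simps)
    qed
    finally show ?thesis by (simp add: ei_def ej_def)
  qed
  have "Cauchy s"
  proof (rule CauchyI)
    fix e :: real assume e: "0 < e"
    obtain M :: nat where M: "(4 * d + 2) * 2 / e\<^sup>2 < real M"
      using reals_Archimedean2 by blast
    show "\<exists>M. \<forall>m\<ge>M. \<forall>n\<ge>M. norm (s m - s n) < e"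
    proof (intro exI allI impI)
      fix m n assume mM: "M \<le> m" and nM: "M \<le> n"
      have e1: "1 / (real m + 1) \<le> 1 / (real M + 1)" using mM by (simp add: frac_le)
      have e2: "1 / (real n + 1) \<le> 1 / (real M + 1)" using nM by (simp add: frac_le)
      have "(norm (s m - s n))\<^sup>2 \<le> (4 * d + 2) * (2 / (real M + 1))"
      proof -
        have "1 / (real m + 1) + 1 / (real n + 1) \<le> 2 / (real M + 1)" using e1 e2 by simp
        then have "(4 * d + 2) * (1 / (real m + 1) + 1 / (real n + 1)) \<le> (4 * d + 2) * (2 / (real M + 1))"
          using d0 by (intro mult_left_mono) auto
        then show ?thesis using key[of m n] by linarith
      qed
      also have "\<dots> < e\<^sup>2"
      proof -
        have "(4 * d + 2) * 2 < e\<^sup>2 * real M" using M e by (simp add: field_simps)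
        also have "\<dots> \<le> e\<^sup>2 * (real M + 1)" using e by simp
        finally show ?thesis by (simp add: field_simps)
      qed
      finally show "norm (s m - s n) < e"
        using e by (smt (verit) norm_ge_zero power_mono)
    qed
  qed
  then obtain n0 where lim: "s \<longlonglongrightarrow> n0" using Cauchy_convergent convergent_def by blast
  have limn: "(\<lambda>j. norm (s j - n0)) \<longlonglongrightarrow> 0"
    using tendsto_norm[OF tendsto_diff[OF lim tendsto_const[of n0]]] by simp
  have "f n0 = 0"
  proof -
    have "(\<lambda>j. K * norm (s j - n0)) \<longlonglongrightarrow> 0" using tendsto_mult_right_zero[OF limn] by simp
    moreover have "cmod (f n0) \<le> K * norm (s j - n0)" for j
    proof -
      have "f n0 = - f (s j - n0)" using sN[of j] by (simp add: fdiff N_def)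
      then have "cmod (f n0) = cmod (f (s j - n0))" by simp
      also have "\<dots> \<le> K * norm (s j - n0)" by (rule bd)
      finally show ?thesis .
    qed
    ultimately have "cmod (f n0) \<le> 0"
      by (intro tendsto_le[OF _ _ tendsto_const]) auto
    then show ?thesis by simp
  qed
  then have n0N: "n0 \<in> N" by (simp add: N_def)
  have "norm (u - n0) \<le> d"
  proof (rule tendsto_le[OF _ _ tendsto_norm[OF tendsto_diff[OF tendsto_const lim]]])
    show "((\<lambda>j. d + 1 / (real j + 1)) \<longlongrightarrow> d) sequentially"
      using LIMSEQ_inverse_real_of_nat_add[of d]
      by (simp add: inverse_eq_divide add.commute)
    show "\<forall>\<^sub>F j in sequentially. norm (u - s j) \<le> d + 1 / (real j + 1)"
      using sd by (intro always_eventually allI less_imp_le)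
  qed simp
  define v where "v = u - n0"
  have vmin: "norm v \<le> norm (v - n)" if "n \<in> N" for n
  proof -
    have "n0 + n \<in> N" using that n0N by (simp add: N_def add)
    then have "d \<le> norm (u - (n0 + n))" by (rule dle)
    then show ?thesis using \<open>norm (u - n0) \<le> d\<close> by (simp add: v_def algebra_simps)
  qed
  have fv: "f v = f u" using \<open>f n0 = 0\<close> by (simp add: v_def fdiff)
  have orth: "cinner v n = 0" if nN: "n \<in> N" for n
  proof -
    define c where "c = cinner v n"
    define \<epsilon> where "\<epsilon> = 1 / ((norm n)\<^sup>2 + 1)"
    have ep: "\<epsilon> > 0" unfolding \<epsilon>_def by (simp add: add_nonneg_pos)
    define t where "t = complex_of_real \<epsilon> * cnj c"
    have tN: "scaleC t n \<in> N" using nN by (simp add: N_def sc)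
    define C where "C = (cmod c)\<^sup>2"
    define N2 where "N2 = (norm n)\<^sup>2"
    have C0: "C \<ge> 0" by (simp add: C_def)
    have h1: "(norm v)\<^sup>2 \<le> (norm (v - scaleC t n))\<^sup>2"
      using vmin[OF tN] by (simp add: power_mono)
    have tc: "t * cinner v n = complex_of_real (\<epsilon> * C)"
    proof -
      have cc: "cnj c * c = complex_of_real C"
        unfolding C_def complex_norm_square by (rule mult.commute)
      have "t * cinner v n = complex_of_real \<epsilon> * (cnj c * c)"
        unfolding t_def c_def by (simp only: mult.assoc)
      then show ?thesis by (simp add: cc)
    qed
    have ct: "(cmod t)\<^sup>2 = \<epsilon> * \<epsilon> * C"
    proof -
      have "cmod t = \<epsilon> * cmod c" unfolding t_def using ep by (simp add: norm_mult)
      then show ?thesis by (simp add: power2_eq_square C_def)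
    qed
    have h2: "(norm (v - scaleC t n))\<^sup>2 = (norm v)\<^sup>2 - 2 * (\<epsilon> * C) + (\<epsilon> * \<epsilon> * C) * N2"
      unfolding norm_diff_scaleC_sq tc ct N2_def Re_complex_of_real by (rule refl)
    have "\<epsilon> * (2 * C) \<le> \<epsilon> * (\<epsilon> * C * N2)"
      using h1 h2 by (simp add: algebra_simps)
    then have h3: "2 * C \<le> \<epsilon> * C * N2" using ep by simp
    have "(norm n)\<^sup>2 + 1 > 0" by (simp add: add_nonneg_pos)
    then have "\<epsilon> * N2 \<le> 1" unfolding \<epsilon>_def N2_def by (simp add: divide_le_eq)
    then have "\<epsilon> * C * N2 \<le> C" using C0
      by (metis mult.assoc mult.commute mult_left_le)
    then have "C = 0" using h3 C0 by linarith
    then show ?thesis by (simp add: C_def c_def)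
  qed
  have v0: "v \<noteq> 0" using fv fu f0 by auto
  define nv where "nv = complex_of_real ((norm v)\<^sup>2)"
  have nv0: "nv \<noteq> 0" using v0 by (simp add: nv_def)
  have cvv: "cinner v v = nv" by (simp add: nv_def cinner_self_norm)
  show ?thesis
  proof (intro exI allI)
    fix x
    define y where "y = x - scaleC (f x / f v) v"
    have "f y = 0" using fv fu by (simp add: y_def fdiff sc)
    then have "cinner v y = 0" using orth by (simp add: N_def)
    then have "cinner v x = (f x / f v) * nv"
      by (simp add: y_def cinner_diff_right cinner_scaleC_right cvv)
    then show "f x = cinner (scaleC (cnj (f v) / nv) v) x"
      using nv0 fv fu
      by (simp add: cinner_scaleC_left nv_def)
  qed
qed

lemma adj_property:
  fixes T :: "'a::complex_hilbert \<Rightarrow> 'a"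
  assumes "bounded_op T"
  shows "cinner (T x) y = cinner x (adj T y)"
proof -
  have bl: "bounded_linear T" and scT: "\<And>c x. T (scaleC c x) = scaleC c (T x)"
    using assms by (auto simp: bounded_op_def)
  obtain K where K: "\<And>x. norm (T x) \<le> norm x * K" "K > 0"
    using bounded_linear.pos_bounded[OF bl] by blast
  have "\<forall>y. \<exists>z. \<forall>x. cinner y (T x) = cinner z x"
  proof
    fix y
    show "\<exists>z. \<forall>x. cinner y (T x) = cinner z x"
    proof (rule riesz[where K = "norm y * K"])
      show "cinner y (T (a + b)) = cinner y (T a) + cinner y (T b)" for a b
        by (simp add: linear_add[OF bounded_linear.linear[OF bl]] cinner_add_right)
      show "cinner y (T (scaleC c a)) = c * cinner y (T a)" for c a
        by (simp add: scT cinner_scaleC_right)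
      show "cmod (cinner y (T a)) \<le> norm y * K * norm a" for a
      proof -
        have "cmod (cinner y (T a)) \<le> norm y * norm (T a)" by (rule cauchy_schwarz)
        also have "\<dots> \<le> norm y * (norm a * K)" using K by (simp add: mult_left_mono)
        finally show ?thesis by (simp add: algebra_simps)
      qed
    qed
  qed
  then obtain S where S: "\<And>y x. cinner y (T x) = cinner (S y) x" by metis
  have "\<exists>S. \<forall>x y. cinner (T x) y = cinner x (S y)"
    by (rule exI[of _ S]) (metis S cinner_commute)
  from someI_ex[OF this] show ?thesis unfolding adj_def by blast
qed


lemma affine_maxmod:
  fixes a b c d :: complex
  assumes dc: "cmod d < cmod c"
    and bd: "\<And>w. cmod w = 1 \<Longrightarrow> cmod (a * w - b) \<le> cmod (c - d * w)"
    and w: "cmod w \<le> 1"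
  shows "cmod (a * w - b) \<le> cmod (c - d * w)"
proof -
  have nz: "c - d * z \<noteq> 0" if "cmod z \<le> 1" for z
  proof
    assume "c - d * z = 0"
    then have "cmod c = cmod d * cmod z" by (simp add: norm_mult)
    also have "\<dots> \<le> cmod d" using that by (simp add: mult_left_le)
    finally show False using dc by simp
  qed
  define g where "g z = (a * z - b) / (c - d * z)" for z
  have "cmod (g w) \<le> 1"
  proof (cases "cmod w = 1")
    case True
    then show ?thesis using bd[OF True] nz[of w] by (simp add: g_def norm_divide divide_le_eq_1)
  next
    case False
    then have wb: "w \<in> ball 0 1" using w by simp
    show ?thesis
    proof (rule maximum_modulus_frontier[of g "ball 0 1" 1 w])
      show "g holomorphic_on interior (ball 0 1)"
        unfolding g_def using nz by (auto intro!: holomorphic_intros simp: dist_norm)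
      show "continuous_on (closure (ball 0 1)) g"
        unfolding g_def using nz by (auto intro!: continuous_intros simp: dist_norm)
      show "bounded (ball (0::complex) 1)" by simp
      show "cmod (g z) \<le> 1" if "z \<in> frontier (ball 0 1)" for z
        using that bd[of z] nz[of z] by (simp add: g_def norm_divide divide_le_eq_1 dist_norm)
    qed (rule wb)
  qed
  then show ?thesis using nz[OF w] by (simp add: g_def norm_divide divide_le_eq_1)
qed

definition P1 :: "real \<Rightarrow> complex \<Rightarrow> complex \<Rightarrow> complex \<Rightarrow> bool" where
  "P1 k a b c \<longleftrightarrow> cmod (of_real k * a * b * c - (a * b + b * c + c * a)) \<le> cmod (of_real k - (a + b + c))"

definition P2 :: "real \<Rightarrow> complex \<Rightarrow> complex \<Rightarrow> complex \<Rightarrow> bool" where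
  "P2 k a b c \<longleftrightarrow> cmod (of_real k * a * b * c - (a + b + c)) \<le> cmod (of_real k - (a * b + b * c + c * a))"

lemma P1_swap: "P1 k a b c = P1 k a c b" unfolding P1_def by (simp add: algebra_simps)
lemma P1_rot: "P1 k a b c = P1 k b c a" unfolding P1_def by (simp add: algebra_simps)
lemma P2_swap: "P2 k a b c = P2 k a c b" unfolding P2_def by (simp add: algebra_simps)
lemma P2_rot: "P2 k a b c = P2 k b c a" unfolding P2_def by (simp add: algebra_simps)

lemma unimod_cnj: "cmod w = 1 \<Longrightarrow> w * cnj w = 1"
  using complex_norm_square[of w] by simp

lemma P1_unimod:
  assumes "cmod a = 1" "cmod b = 1" "cmod c = 1"
  shows "P1 k a b c"
proof -
  have ua: "a * cnj a = 1" and ub: "b * cnj b = 1" and uc: "c * cnj c = 1"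
    using unimod_cnj assms by auto
  have h1: "a * b * c * cnj a = b * c"
  proof - have "a * b * c * cnj a = (a * cnj a) * (b * c)" by (simp only: mult_ac) then show ?thesis by (simp add: ua) qed
  have h2: "a * b * c * cnj b = c * a"
  proof - have "a * b * c * cnj b = (b * cnj b) * (c * a)" by (simp only: mult_ac) then show ?thesis by (simp add: ub) qed
  have h3: "a * b * c * cnj c = a * b"
  proof - have "a * b * c * cnj c = (c * cnj c) * (a * b)" by (simp only: mult_ac) then show ?thesis by (simp add: uc) qed
  have "(a * b * c) * cnj (of_real k - (a + b + c)) = of_real k * a * b * c - (a * b * c * cnj a + a * b * c * cnj b + a * b * c * cnj c)"
    by (simp add: algebra_simps)
  then have "of_real k * a * b * c - (a * b + b * c + c * a) = (a * b * c) * cnj (of_real k - (a + b + c))"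
    unfolding h1 h2 h3 by (simp add: algebra_simps)
  then have "cmod (of_real k * a * b * c - (a * b + b * c + c * a)) = cmod (a * b * c) * cmod (cnj (of_real k - (a + b + c)))"
    by (simp only: norm_mult)
  also have "\<dots> = cmod (of_real k - (a + b + c))" using assms by (simp only: complex_mod_cnj norm_mult)
  finally show ?thesis unfolding P1_def by simp
qed

lemma P2_unimod:
  assumes "cmod a = 1" "cmod b = 1" "cmod c = 1"
  shows "P2 k a b c"
proof -
  have ua: "a * cnj a = 1" and ub: "b * cnj b = 1" and uc: "c * cnj c = 1"
    using unimod_cnj assms by auto
  have h1: "a * b * c * (cnj a * cnj b) = c"
  proof - have "a * b * c * (cnj a * cnj b) = (a * cnj a) * (b * cnj b) * c" by (simp only: mult_ac) then show ?thesis by (simp add: ua ub) qed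
  have h2: "a * b * c * (cnj b * cnj c) = a"
  proof - have "a * b * c * (cnj b * cnj c) = (b * cnj b) * (c * cnj c) * a" by (simp only: mult_ac) then show ?thesis by (simp add: uc ub) qed
  have h3: "a * b * c * (cnj c * cnj a) = b"
  proof - have "a * b * c * (cnj c * cnj a) = (c * cnj c) * (a * cnj a) * b" by (simp only: mult_ac) then show ?thesis by (simp add: ua uc) qed
  have "(a * b * c) * cnj (of_real k - (a * b + b * c + c * a)) = of_real k * a * b * c - (a * b * c * (cnj a * cnj b) + a * b * c * (cnj b * cnj c) + a * b * c * (cnj c * cnj a))"
    by (simp add: algebra_simps)
  then have "of_real k * a * b * c - (a + b + c) = (a * b * c) * cnj (of_real k - (a * b + b * c + c * a))"
    unfolding h1 h2 h3 by (simp add: algebra_simps)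
  then have "cmod (of_real k * a * b * c - (a + b + c)) = cmod (a * b * c) * cmod (cnj (of_real k - (a * b + b * c + c * a)))"
    by (simp only: norm_mult)
  also have "\<dots> = cmod (of_real k - (a * b + b * c + c * a))" using assms by (simp only: complex_mod_cnj norm_mult)
  finally show ?thesis unfolding P2_def by simp
qed

lemma P1_step:
  assumes k: "k > 3" and a: "cmod a \<le> 1" and b: "cmod b \<le> 1" and c: "cmod c \<le> 1"
    and h: "\<And>w. cmod w = 1 \<Longrightarrow> P1 k a b w"
  shows "P1 k a b c"
proof -
  have e1: "of_real k * a * b * w - (a * b + b * w + w * a) = (of_real k * a * b - a - b) * w - a * b" for w
    by (simp add: algebra_simps)
  have e2: "of_real k - (a + b + w) = (of_real k - a - b) - 1 * w" for w
    by (simp add: algebra_simps)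
  have "k = cmod (of_real k :: complex)" using k by simp
  also have "\<dots> = cmod ((of_real k - a - b) + (a + b))" by simp
  also have "\<dots> \<le> cmod (of_real k - a - b) + cmod (a + b)" by (rule norm_triangle_ineq)
  also have "\<dots> \<le> cmod (of_real k - a - b) + (cmod a + cmod b)" using norm_triangle_ineq[of a b] by simp
  finally have "cmod (1::complex) < cmod (of_real k - a - b)" using a b k by simp
  from affine_maxmod[OF this _ c] h show ?thesis
    unfolding P1_def e1 e2 by blast
qed

lemma P2_step:
  assumes k: "k > 3" and a: "cmod a \<le> 1" and b: "cmod b \<le> 1" and c: "cmod c \<le> 1"
    and h: "\<And>w. cmod w = 1 \<Longrightarrow> P2 k a b w"
  shows "P2 k a b c"
proof -
  have e1: "of_real k * a * b * w - (a + b + w) = (of_real k * a * b - 1) * w - (a + b)" for w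
    by (simp add: algebra_simps)
  have e2: "of_real k - (a * b + b * w + w * a) = (of_real k - a * b) - (a + b) * w" for w
    by (simp add: algebra_simps)
  have ab: "cmod (a * b) \<le> 1" using a b by (simp add: norm_mult mult_le_one)
  have "k = cmod (of_real k :: complex)" using k by simp
  also have "\<dots> = cmod ((of_real k - a * b) + a * b)" by simp
  also have "\<dots> \<le> cmod (of_real k - a * b) + cmod (a * b)" by (rule norm_triangle_ineq)
  finally have 1: "k - 1 \<le> cmod (of_real k - a * b)" using ab by simp
  have "cmod (a + b) \<le> 2" using a b norm_triangle_ineq[of a b] by simp
  then have "cmod (a + b) < cmod (of_real k - a * b)" using 1 k by simp
  from affine_maxmod[OF this _ c] h show ?thesis
    unfolding P2_def e1 e2 by blast
qed

lemma P1_disc: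
  assumes k: "k > 3" and a: "cmod a \<le> 1" and b: "cmod b \<le> 1" and c: "cmod c \<le> 1"
  shows "P1 k a b c"
proof -
  have s1: "P1 k x y z" if "cmod x = 1" "cmod y = 1" "cmod z \<le> 1" for x y z
    using P1_step[of k x y z] P1_unimod that k by simp
  have s2: "P1 k x y z" if "cmod x = 1" "cmod y \<le> 1" "cmod z \<le> 1" for x y z
  proof -
    have "P1 k x z y" using P1_step[of k x z y] that k s1 P1_swap by simp
    then show ?thesis using P1_swap by blast
  qed
  have "P1 k b c a"
  proof (rule P1_step[of k b c a])
    fix w :: complex assume "cmod w = 1"
    then have "P1 k w b c" using s2 b c by blast
    then show "P1 k b c w" using P1_rot[of k w b c] by simp
  qed (use a b c k in auto)
  then show ?thesis using P1_rot[of k a b c] by simp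
qed

lemma P2_disc:
  assumes k: "k > 3" and a: "cmod a \<le> 1" and b: "cmod b \<le> 1" and c: "cmod c \<le> 1"
  shows "P2 k a b c"
proof -
  have s1: "P2 k x y z" if "cmod x = 1" "cmod y = 1" "cmod z \<le> 1" for x y z
    using P2_step[of k x y z] P2_unimod that k by simp
  have s2: "P2 k x y z" if "cmod x = 1" "cmod y \<le> 1" "cmod z \<le> 1" for x y z
  proof -
    have "P2 k x z y" using P2_step[of k x z y] that k s1 P2_swap by simp
    then show ?thesis using P2_swap by blast
  qed
  have "P2 k b c a"
  proof (rule P2_step[of k b c a])
    fix w :: complex assume "cmod w = 1"
    then have "P2 k w b c" using s2 b c by blast
    then show "P2 k b c w" using P2_rot[of k w b c] by simp
  qed (use a b c k in auto)
  then show ?thesis using P2_rot[of k a b c] by simp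
qed


lemma bop_bl: "bounded_op T \<Longrightarrow> bounded_linear T" by (simp add: bounded_op_def)
lemma bop_sc: "bounded_op T \<Longrightarrow> T (scaleC c x) = scaleC c (T x)" by (simp add: bounded_op_def)
lemma bop_add: "bounded_op T \<Longrightarrow> T (x + y) = T x + T y"
  by (simp add: bounded_op_def linear_add[OF bounded_linear.linear])
lemma bop_zero: "bounded_op T \<Longrightarrow> T 0 = 0"
  using bop_add[of T 0 0] by simp
lemma bop_minus: "bounded_op T \<Longrightarrow> T (- x) = - T x"
  using bop_add[of T x "-x"] bop_zero[of T] by (simp add: eq_neg_iff_add_eq_0 add.commute)
lemma bop_diff: "bounded_op T \<Longrightarrow> T (x - y) = T x - T y"
  using bop_add[of T x "-y"] bop_minus[of T y] by simp
lemma bop_sum: "bounded_op T \<Longrightarrow> T (sum f A) = (\<Sum>i\<in>A. T (f i))"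
  by (induction A rule: infinite_finite_induct) (auto simp: bop_zero bop_add)

lemma bop_id: "bounded_op (id :: 'a::complex_hilbert \<Rightarrow> 'a)"
  by (simp add: bounded_op_def bounded_linear_ident[unfolded id_def[symmetric]])

lemma bop_comp: "bounded_op T \<Longrightarrow> bounded_op U \<Longrightarrow> bounded_op (T \<circ> U)"
  unfolding bounded_op_def by (auto simp: o_def intro: bounded_linear_compose)

lemma bop_pow: "bounded_op T \<Longrightarrow> bounded_op (T ^^ n)"
  by (induction n) (auto simp: bop_id bop_comp)

lemma bop_scale: "bounded_op T \<Longrightarrow> bounded_op (\<lambda>x. scaleC a (T x))"
  unfolding bounded_op_def
  by (auto intro: bounded_linear_compose[OF bounded_linear_scaleC, unfolded o_def] simp: scaleC_scaleC mult.commute)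

lemma bop_plus: "bounded_op T \<Longrightarrow> bounded_op U \<Longrightarrow> bounded_op (\<lambda>x. T x + U x)"
  unfolding bounded_op_def by (auto intro: bounded_linear_add simp: scaleC_add_right)

lemma bop_minus_op: "bounded_op T \<Longrightarrow> bounded_op U \<Longrightarrow> bounded_op (\<lambda>x. T x - U x)"
  unfolding bounded_op_def by (auto intro: bounded_linear_sub simp: scaleC_diff_right)

lemma bop_sum_op: "(\<And>i. i \<in> A \<Longrightarrow> bounded_op (F i)) \<Longrightarrow> bounded_op (\<lambda>x. \<Sum>i\<in>A. F i x)"
  unfolding bounded_op_def by (auto intro!: bounded_linear_sum simp: scaleC_sum_right)

lemma comm_pow1: "T \<circ> U = U \<circ> T \<Longrightarrow> T ((U ^^ j) x) = (U ^^ j) (T x)"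
proof (induction j arbitrary: x)
  case 0 then show ?case by simp
next
  case (Suc j)
  have "T (U ((U ^^ j) x)) = U (T ((U ^^ j) x))" using Suc.prems by (metis comp_apply)
  then show ?case using Suc by simp
qed

lemma comm_pow: "T \<circ> U = U \<circ> T \<Longrightarrow> (T ^^ i) ((U ^^ j) x) = (U ^^ j) ((T ^^ i) x)"
proof (induction i arbitrary: x)
  case 0 then show ?case by simp
next
  case (Suc i)
  then show ?case using comm_pow1[OF Suc.prems] by simp
qed

lemma poly3_op_bop:
  assumes "bounded_op A" "bounded_op B" "bounded_op C"
  shows "bounded_op (poly3_op c N A B C)"
proof -
  have "bounded_op (\<lambda>x. scaleC (c i j l) ((A ^^ i) ((B ^^ j) ((C ^^ l) x))))" for i j l
    using bop_scale[OF bop_comp[OF bop_pow[OF assms(1)] bop_comp[OF bop_pow[OF assms(2)] bop_pow[OF assms(3)]]]]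
    by (simp add: o_def)
  then show ?thesis unfolding poly3_op_def[abs_def] by (intro bop_sum_op) auto
qed

lemma poly3_add: "poly3 (\<lambda>i j l. c i j l + d i j l) N z = poly3 c N z + poly3 d N z"
  unfolding poly3_def by (cases z) (simp add: algebra_simps sum.distrib)

lemma poly3_op_add: "poly3_op (\<lambda>i j l. c i j l + d i j l) N A B C x = poly3_op c N A B C x + poly3_op d N A B C x"
  unfolding poly3_op_def by (simp add: scaleC_add_left sum.distrib)

lemma poly3_prod: "poly3 (\<lambda>i j l. a i * b j * e l) N (z1, z2, z3) =
   (\<Sum>i\<le>N. a i * z1 ^ i) * (\<Sum>j\<le>N. b j * z2 ^ j) * (\<Sum>l\<le>N. e l * z3 ^ l)"
  unfolding poly3_def by (simp add: sum_distrib_left sum_distrib_right algebra_simps) (rule sum.swap)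

lemma poly3_op_prod:
  assumes "bounded_op A" "bounded_op B"
  shows "poly3_op (\<lambda>i j l. a i * b j * e l) N A B C x =
   (\<Sum>i\<le>N. scaleC (a i) ((A ^^ i) (\<Sum>j\<le>N. scaleC (b j) ((B ^^ j) (\<Sum>l\<le>N. scaleC (e l) ((C ^^ l) x))))))"
  unfolding poly3_op_def
  by (simp add: bop_sum[OF bop_pow[OF assms(1)]] bop_sum[OF bop_pow[OF assms(2)]]
      bop_sc[OF bop_pow[OF assms(1)]] bop_sc[OF bop_pow[OF assms(2)]] scaleC_sum_right scaleC_scaleC mult.assoc)

lemma delta_sum: "m \<le> N \<Longrightarrow> (\<Sum>i\<le>N. (if i = m then v else 0) * (z::complex) ^ i) = v * z ^ m"
  by (simp add: if_distrib[of "\<lambda>t. t * _"] cong: if_cong)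

lemma delta_sum_op: "m \<le> N \<Longrightarrow> (\<Sum>i\<le>N. scaleC (if i = m then v else 0) ((T ^^ i) x)) = scaleC v ((T ^^ m) x)"
proof -
  assume m: "m \<le> N"
  have "(\<Sum>i\<le>N. scaleC (if i = m then v else 0) ((T ^^ i) x)) = (\<Sum>i\<le>N. if i = m then scaleC v ((T ^^ i) x) else 0)"
    by (rule sum.cong) auto
  also have "\<dots> = scaleC v ((T ^^ m) x)" using m by simp
  finally show ?thesis .
qed

lemma trunc_sum: "(\<Sum>i\<le>M. (if i < M then g i else 0) * (z::complex) ^ i) = (\<Sum>i<M. g i * z ^ i)"
proof -
  have "(\<Sum>i\<le>M. (if i < M then g i else 0) * z ^ i) = (\<Sum>i\<le>M. if i \<in> {..<M} then g i * z ^ i else 0)"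
    by (rule sum.cong) auto
  also have "\<dots> = (\<Sum>i\<in>{..M} \<inter> {..<M}. g i * z ^ i)" by (rule sum.inter_restrict[symmetric]) simp
  also have "{..M} \<inter> {..<M} = {..<M}" by auto
  finally show ?thesis .
qed

lemma trunc_sum_op: "(\<Sum>i\<le>M. scaleC (if i < M then g i else 0) ((T ^^ i) x)) = (\<Sum>i<M. scaleC (g i) ((T ^^ i) x))"
proof -
  have "(\<Sum>i\<le>M. scaleC (if i < M then g i else 0) ((T ^^ i) x)) = (\<Sum>i\<le>M. if i \<in> {..<M} then scaleC (g i) ((T ^^ i) x) else 0)"
    by (rule sum.cong) auto
  also have "\<dots> = (\<Sum>i\<in>{..M} \<inter> {..<M}. scaleC (g i) ((T ^^ i) x))" by (rule sum.inter_restrict[symmetric]) simp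
  also have "{..M} \<inter> {..<M} = {..<M}" by auto
  finally show ?thesis .
qed


definition dl :: "nat \<Rightarrow> nat \<Rightarrow> complex" where "dl m i = (if i = m then 1 else 0)"

lemma delta_sum1: "m \<le> N \<Longrightarrow> (\<Sum>i\<le>N. dl m i * (z::complex) ^ i) = z ^ m"
  unfolding dl_def using delta_sum[of m N 1 z] by simp

lemma delta_sum_op1: "m \<le> N \<Longrightarrow> (\<Sum>i\<le>N. scaleC (dl m i) ((T ^^ i) x)) = (T ^^ m) x"
  unfolding dl_def using delta_sum_op[of m N 1 T x] by (simp add: scaleC_one)

lemma Gamma3_ne: "Gamma3 \<noteq> {}"
  unfolding Gamma3_def by (rule ex_in_conv[THEN iffD1]) (rule exI[of _ "(0,0,0)"], force)

lemma Gamma3_elim: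
  assumes "z \<in> Gamma3"
  obtains z1 z2 z3 where "cmod z1 \<le> 1" "cmod z2 \<le> 1" "cmod z3 \<le> 1"
    "z = (z1 + z2 + z3, z1 * z2 + z2 * z3 + z3 * z1, z1 * z2 * z3)"
  using assms unfolding Gamma3_def by blast

lemma tri3: "cmod (a + b + c) \<le> cmod a + cmod b + cmod c"
  by (rule order_trans[OF norm_triangle_ineq]) (use norm_triangle_ineq[of a b] in simp)

lemma Gamma3_bd1: "(s1, s2, p) \<in> Gamma3 \<Longrightarrow> cmod s1 \<le> 3"
proof -
  assume "(s1, s2, p) \<in> Gamma3"
  then obtain z1 z2 z3 where z: "cmod z1 \<le> 1" "cmod z2 \<le> 1" "cmod z3 \<le> 1" "s1 = z1 + z2 + z3"
    by (rule Gamma3_elim) auto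
  have "cmod s1 \<le> cmod z1 + cmod z2 + cmod z3" unfolding z(4)
    by (rule tri3)
  then show ?thesis using z by simp
qed

lemma Gamma3_bd2: "(s1, s2, p) \<in> Gamma3 \<Longrightarrow> cmod s2 \<le> 3"
proof -
  assume "(s1, s2, p) \<in> Gamma3"
  then obtain z1 z2 z3 where z: "cmod z1 \<le> 1" "cmod z2 \<le> 1" "cmod z3 \<le> 1" "s2 = z1 * z2 + z2 * z3 + z3 * z1"
    by (rule Gamma3_elim) auto
  have a: "cmod (z1 * z2) \<le> 1" "cmod (z2 * z3) \<le> 1" "cmod (z3 * z1) \<le> 1"
    using z by (auto simp: norm_mult mult_le_one)
  have "cmod s2 \<le> cmod (z1 * z2) + cmod (z2 * z3) + cmod (z3 * z1)" unfolding z(4)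
    by (rule tri3)
  then show ?thesis using a by simp
qed

context
  fixes S1 S2 P :: "'a::complex_hilbert \<Rightarrow> 'a"
  assumes G: "gamma3_contraction S1 S2 P"
begin

lemma bS1: "bounded_op S1" and bS2: "bounded_op S2" and bP: "bounded_op P"
  and cm: "commuting3 S1 S2 P"
  using G by (auto simp: gamma3_contraction_def)

lemma vN:
  assumes bd: "\<And>z. z \<in> Gamma3 \<Longrightarrow> cmod (poly3 c N z) \<le> M"
  shows "norm (poly3_op c N S1 S2 P x) \<le> M * norm x"
proof -
  define q where "q = (\<lambda>i j l. dl 0 i * dl 0 j * dl 0 l)"
  have q1: "poly3 q N z = 1" for z
    unfolding q_def by (cases z) (simp add: poly3_prod delta_sum1)
  have qop: "poly3_op q N S1 S2 P = id"
    unfolding q_def by (rule ext) (simp add: poly3_op_prod[OF bS1 bS2] delta_sum_op1)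
  have "onorm (poly3_op c N S1 S2 P \<circ> inv (poly3_op q N S1 S2 P))
         \<le> (SUP z\<in>Gamma3. cmod (poly3 c N z / poly3 q N z))"
  proof -
    have all: "\<forall>z\<in>Gamma3. poly3 q N z \<noteq> 0" by (simp add: q1)
    show ?thesis using G all unfolding gamma3_contraction_def by blast
  qed
  also have "\<dots> \<le> M" using bd q1 by (intro cSUP_least[OF Gamma3_ne]) simp
  finally have on: "onorm (poly3_op c N S1 S2 P) \<le> M" by (simp add: qop)
  have "bounded_linear (poly3_op c N S1 S2 P)" using poly3_op_bop[OF bS1 bS2 bP] bop_bl by blast
  from onorm[OF this, of x] have "norm (poly3_op c N S1 S2 P x) \<le> onorm (poly3_op c N S1 S2 P) * norm x" .
  also have "\<dots> \<le> M * norm x" using on by (simp add: mult_right_mono)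
  finally show ?thesis .
qed

lemma normS1: "norm (S1 x) \<le> 3 * norm x"
proof -
  define c where "c = (\<lambda>i j l. dl 1 i * dl 0 j * dl 0 l)"
  have pe: "poly3 c 1 z = fst z" for z
    unfolding c_def by (cases z) (simp add: poly3_prod dl_def)
  moreover have "poly3_op c 1 S1 S2 P x = S1 x"
    unfolding c_def by (simp add: poly3_op_prod[OF bS1 bS2] dl_def scaleC_one bop_zero[OF bS1] bop_zero[OF bS2])
  moreover have "cmod (poly3 c 1 z) \<le> 3" if "z \<in> Gamma3" for z
  proof -
    have "cmod (fst z) \<le> 3" using that by (cases z) (auto intro: Gamma3_bd1)
    then show ?thesis by (simp only: pe)
  qed
  ultimately show ?thesis using vN[of c 1 3 x] by simp
qed

lemma normS2: "norm (S2 x) \<le> 3 * norm x"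
proof -
  define c where "c = (\<lambda>i j l. dl 0 i * dl 1 j * dl 0 l)"
  have pe: "poly3 c 1 z = fst (snd z)" for z
    unfolding c_def by (cases z) (simp add: poly3_prod dl_def)
  moreover have "poly3_op c 1 S1 S2 P x = S2 x"
    unfolding c_def by (simp add: poly3_op_prod[OF bS1 bS2] dl_def scaleC_one bop_zero[OF bS1] bop_zero[OF bS2])
  moreover have "cmod (poly3 c 1 z) \<le> 3" if "z \<in> Gamma3" for z
  proof -
    have "cmod (fst (snd z)) \<le> 3" using that by (cases z) (auto intro: Gamma3_bd2)
    then show ?thesis by (simp only: pe)
  qed
  ultimately show ?thesis using vN[of c 1 3 x] by simp
qed

end


lemma norm_pow_le:
  assumes bT: "bounded_op T" and nT: "\<And>u. norm (T u) \<le> 3 * norm u"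
  shows "norm ((T ^^ M) u) \<le> 3 ^ M * norm u"
proof (induction M)
  case 0 then show ?case by simp
next
  case (Suc M)
  have "norm ((T ^^ Suc M) u) = norm (T ((T ^^ M) u))" by simp
  also have "\<dots> \<le> 3 * norm ((T ^^ M) u)" by (rule nT)
  also have "\<dots> \<le> 3 * (3 ^ M * norm u)" using Suc by simp
  finally show ?case by simp
qed

lemma telescope_op:
  fixes T B :: "'a::complex_hilbert \<Rightarrow> 'a"
  assumes bT: "bounded_op T" and bB: "bounded_op B" and comm: "T \<circ> B = B \<circ> T" and kc: "kc \<noteq> 0"
  shows "(\<Sum>i<M. scaleC (\<beta> ^ i / kc ^ (i + 1)) ((T ^^ i) (B (scaleC kc x - scaleC \<beta> (T x)))))
     = B x - scaleC ((\<beta> / kc) ^ M) ((T ^^ M) (B x))"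
proof -
  define f where "f i = scaleC ((\<beta> / kc) ^ i) ((T ^^ i) (B x))" for i
  have BT: "B (T x) = T (B x)" using comm by (metis comp_apply)
  have hterm: "scaleC (\<beta> ^ i / kc ^ (i + 1)) ((T ^^ i) (B (scaleC kc x - scaleC \<beta> (T x)))) = f i - f (Suc i)" for i
  proof -
    have bTi: "bounded_op (T ^^ i)" by (rule bop_pow[OF bT])
    have "(T ^^ i) (B (scaleC kc x - scaleC \<beta> (T x))) = scaleC kc ((T ^^ i) (B x)) - scaleC \<beta> ((T ^^ Suc i) (B x))"
      by (simp add: bop_diff[OF bB] bop_sc[OF bB] BT bop_diff[OF bTi] bop_sc[OF bTi] funpow_swap1)
    moreover have "\<beta> ^ i / kc ^ (i + 1) * kc = (\<beta> / kc) ^ i" using kc by (simp add: power_divide field_simps)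
    moreover have "\<beta> ^ i / kc ^ (i + 1) * \<beta> = (\<beta> / kc) ^ Suc i" using kc by (simp add: power_divide field_simps)
    ultimately show ?thesis by (simp add: f_def scaleC_diff_right scaleC_scaleC)
  qed
  have "(\<Sum>i<M. scaleC (\<beta> ^ i / kc ^ (i + 1)) ((T ^^ i) (B (scaleC kc x - scaleC \<beta> (T x))))) = (\<Sum>i<M. f i - f (Suc i))"
    by (rule sum.cong[OF refl hterm])
  also have "\<dots> = f 0 - f M" by (rule sum_lessThan_telescope')
  finally show ?thesis by (simp add: f_def scaleC_one)
qed

lemma core:
  fixes T B :: "'a::complex_hilbert \<Rightarrow> 'a"
  assumes bT: "bounded_op T" and bB: "bounded_op B" and comm: "T \<circ> B = B \<circ> T"
    and nT: "\<And>u. norm (T u) \<le> 3 * norm u"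
    and beta: "cmod \<beta> \<le> 1" and k: "k > 3"
    and poly: "\<And>M y. M \<ge> 1 \<Longrightarrow> norm (\<Sum>i<M. scaleC (\<beta> ^ i / (of_real k) ^ (i + 1)) ((T ^^ i) (B y)))
                      \<le> (1 + (3 * cmod \<beta> / k) ^ M) * norm y"
  shows "norm (B x) \<le> norm (scaleC (of_real k) x - scaleC \<beta> (T x))"
proof -
  define kc :: complex where "kc = of_real k"
  define \<rho> where "\<rho> = 3 * cmod \<beta> / k"
  define Ax where "Ax = scaleC kc x - scaleC \<beta> (T x)"
  have kc: "kc \<noteq> 0" using k by (simp add: kc_def)
  have r0: "0 \<le> \<rho>" using k by (simp add: \<rho>_def)
  have r1: "\<rho> < 1" using k beta by (simp add: \<rho>_def field_simps)
  have bnd: "norm (B x) \<le> (1 + \<rho> ^ M) * norm Ax + \<rho> ^ M * norm (B x)" if M: "M \<ge> 1" for M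
  proof -
    have e: "(\<Sum>i<M. scaleC (\<beta> ^ i / kc ^ (i + 1)) ((T ^^ i) (B Ax))) = B x - scaleC ((\<beta> / kc) ^ M) ((T ^^ M) (B x))"
      unfolding Ax_def by (rule telescope_op[OF bT bB comm kc])
    have "norm (B x - scaleC ((\<beta> / kc) ^ M) ((T ^^ M) (B x))) \<le> (1 + \<rho> ^ M) * norm Ax"
      using poly[OF M, of Ax] e[unfolded kc_def] unfolding kc_def \<rho>_def by (simp only:)
    moreover have "norm (scaleC ((\<beta> / kc) ^ M) ((T ^^ M) (B x))) \<le> \<rho> ^ M * norm (B x)"
    proof -
      have "norm (scaleC ((\<beta> / kc) ^ M) ((T ^^ M) (B x))) = (cmod \<beta> / k) ^ M * norm ((T ^^ M) (B x))"
        using k by (simp add: norm_scaleC norm_power norm_divide kc_def)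
      also have "\<dots> \<le> (cmod \<beta> / k) ^ M * (3 ^ M * norm (B x))"
        using norm_pow_le[OF bT nT] k by (intro mult_left_mono) auto
      also have "\<dots> = \<rho> ^ M * norm (B x)" by (simp add: \<rho>_def power_mult_distrib power_divide field_simps)
      finally show ?thesis .
    qed
    ultimately show ?thesis using norm_triangle_ineq4[of "B x" "scaleC ((\<beta> / kc) ^ M) ((T ^^ M) (B x))"]
      by (smt (verit) norm_minus_commute norm_triangle_sub)
  qed
  have lim0: "(\<lambda>M. \<rho> ^ Suc M) \<longlonglongrightarrow> 0"
    using LIMSEQ_power_zero[of \<rho>] r0 r1 LIMSEQ_Suc by force
  have "((\<lambda>M. (1 + \<rho> ^ Suc M) * norm Ax + \<rho> ^ Suc M * norm (B x)) \<longlongrightarrow> (1 + 0) * norm Ax + 0 * norm (B x)) sequentially"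
    by (intro tendsto_intros lim0)
  then have "norm (B x) \<le> (1 + 0) * norm Ax + 0 * norm (B x)"
    by (rule tendsto_le[OF trivial_limit_sequentially _ tendsto_const]) (intro always_eventually allI bnd, simp)
  then show ?thesis by (simp add: Ax_def kc_def)
qed

lemma geo:
  fixes kc \<beta> s :: complex
  assumes kc: "kc \<noteq> 0"
  shows "(kc - \<beta> * s) * (\<Sum>i<M. \<beta> ^ i / kc ^ (i + 1) * s ^ i) = 1 - (\<beta> * s / kc) ^ M"
proof -
  define f where "f i = (\<beta> * s / kc) ^ i" for i
  have "(kc - \<beta> * s) * (\<beta> ^ i / kc ^ (i + 1) * s ^ i) = f i - f (Suc i)" for i
    using kc by (simp add: f_def power_divide power_mult_distrib field_simps)
  then have "(kc - \<beta> * s) * (\<Sum>i<M. \<beta> ^ i / kc ^ (i + 1) * s ^ i) = (\<Sum>i<M. f i - f (Suc i))"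
    by (simp add: sum_distrib_left)
  also have "\<dots> = f 0 - f M" by (rule sum_lessThan_telescope')
  finally show ?thesis by (simp add: f_def)
qed

lemma geo_bound:
  fixes \<beta> s :: complex
  assumes k: "k > 3" and s: "cmod s \<le> 3" and beta: "cmod \<beta> \<le> 1"
    and B: "cmod Bs \<le> cmod (of_real k - \<beta> * s)"
  shows "cmod ((\<Sum>i<M. \<beta> ^ i / (of_real k) ^ (i + 1) * s ^ i) * Bs) \<le> 1 + (3 * cmod \<beta> / k) ^ M"
proof -
  define S where "S = (\<Sum>i<M. \<beta> ^ i / (of_real k) ^ (i + 1) * s ^ i)"
  have kc: "(of_real k :: complex) \<noteq> 0" using k by simp
  have "cmod (S * Bs) \<le> cmod S * cmod (of_real k - \<beta> * s)"
    using B by (simp add: norm_mult mult_left_mono)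
  also have "\<dots> = cmod ((of_real k - \<beta> * s) * S)" by (simp only: norm_mult mult.commute)
  also have "\<dots> = cmod (1 - (\<beta> * s / of_real k) ^ M)"
    unfolding S_def geo[OF kc] ..
  also have "\<dots> \<le> 1 + cmod (\<beta> * s / of_real k) ^ M"
    using norm_triangle_ineq4[of "1::complex" "(\<beta> * s / of_real k) ^ M"] by (simp only: norm_one norm_power)
  also have "cmod (\<beta> * s / of_real k) \<le> 3 * cmod \<beta> / k"
    using k s beta by (simp add: norm_mult norm_divide divide_right_mono mult.commute mult_left_mono)
  then have "cmod (\<beta> * s / of_real k) ^ M \<le> (3 * cmod \<beta> / k) ^ M" by (intro power_mono) auto
  finally show ?thesis by (simp add: S_def)
qed


lemma pos_from_norm:
  fixes A B :: "'a::complex_hilbert \<Rightarrow> 'a"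
  assumes bA: "bounded_op A" and bB: "bounded_op B" and le: "\<And>x. norm (B x) \<le> norm (A x)"
  shows "positive_op (\<lambda>x. adj A (A x) - adj B (B x))"
  unfolding positive_op_def
proof
  fix x
  have "cinner x (adj A (A x) - adj B (B x)) = cinner (A x) (A x) - cinner (B x) (B x)"
    by (simp add: cinner_diff_right adj_property[OF bA, symmetric] adj_property[OF bB, symmetric])
  also have "\<dots> = complex_of_real ((norm (A x))\<^sup>2 - (norm (B x))\<^sup>2)"
    by (simp add: cinner_self_norm)
  finally have e: "cinner x (adj A (A x) - adj B (B x)) = complex_of_real ((norm (A x))\<^sup>2 - (norm (B x))\<^sup>2)" .
  have "(norm (B x))\<^sup>2 \<le> (norm (A x))\<^sup>2" using le[of x] by (intro power_mono) auto
  then show "cinner x (adj A (A x) - adj B (B x)) \<in> \<real> \<and> 0 \<le> Re (cinner x (adj A (A x) - adj B (B x)))"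
    unfolding e by simp
qed

lemma eps_arg:
  fixes u v x w :: "'a::complex_hilbert"
  assumes h: "\<And>k'. k' > 3 \<Longrightarrow> norm (scaleC (of_real k') u - v) \<le> norm (scaleC (of_real k') x - w)"
    and k: "k \<ge> 3"
  shows "norm (scaleC (of_real k) u - v) \<le> norm (scaleC (of_real k) x - w)"
proof (rule field_le_epsilon)
  fix e :: real assume e: "0 < e"
  define \<delta> where "\<delta> = e / (norm u + norm x + 1)"
  have d: "\<delta> > 0" using e by (simp add: \<delta>_def add_nonneg_pos)
  have de: "\<delta> * (norm u + norm x) \<le> e"
  proof -
    have pos: "norm u + norm x + 1 > 0" by (smt (verit) norm_ge_zero)
    have "\<delta> * (norm u + norm x + 1) = e" unfolding \<delta>_def using pos by simp
    then show ?thesis using d by (simp add: algebra_simps)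
  qed
  have sp: "scaleC (of_real (k + \<delta>)) y = scaleC (of_real k) y + scaleC (of_real \<delta>) y" for y :: 'a
    by (simp add: scaleC_add_left)
  have n\<delta>: "norm (scaleC (of_real \<delta>) y) = \<delta> * norm y" for y :: 'a
    using d by (simp add: norm_scaleC)
  have "norm (scaleC (of_real k) u - v) = norm ((scaleC (of_real (k + \<delta>)) u - v) - scaleC (of_real \<delta>) u)"
    by (simp only: sp) (simp add: algebra_simps)
  also have "\<dots> \<le> norm (scaleC (of_real (k + \<delta>)) u - v) + \<delta> * norm u"
    using norm_triangle_ineq4 n\<delta> by metis
  also have "norm (scaleC (of_real (k + \<delta>)) u - v) \<le> norm (scaleC (of_real (k + \<delta>)) x - w)"
    using h[of "k + \<delta>"] k d by simp
  also have "norm (scaleC (of_real (k + \<delta>)) x - w) = norm ((scaleC (of_real k) x - w) + scaleC (of_real \<delta>) x)"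
    by (simp only: sp) (simp add: algebra_simps)
  also have "\<dots> \<le> norm (scaleC (of_real k) x - w) + \<delta> * norm x"
    using norm_triangle_ineq n\<delta> by metis
  finally show "norm (scaleC (of_real k) u - v) \<le> norm (scaleC (of_real k) x - w) + e"
    using de by (simp add: algebra_simps)
qed

context
  fixes S1 S2 P :: "'a::complex_hilbert \<Rightarrow> 'a"
  assumes G: "gamma3_contraction S1 S2 P"
begin

lemma c12: "S1 \<circ> S2 = S2 \<circ> S1" and c1P: "S1 \<circ> P = P \<circ> S1" and c2P: "S2 \<circ> P = P \<circ> S2"
  using cm[OF G] by (auto simp: commuting3_def)

lemma inst1:
  assumes k: "k > 3" and M: "M \<ge> 1" and al: "cmod \<alpha> \<le> 1"
  shows "norm (\<Sum>i<M. scaleC (\<alpha> ^ i / (of_real k) ^ (i + 1))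
             ((S1 ^^ i) (scaleC (of_real k * \<alpha> ^ 3) (P y) + scaleC (- (\<alpha> ^ 2)) (S2 y))))
         \<le> (1 + (3 * cmod \<alpha> / k) ^ M) * norm y"
proof -
  define \<gamma> where "\<gamma> i = \<alpha> ^ i / (of_real k :: complex) ^ (i + 1)" for i
  define K3 where "K3 = (of_real k :: complex) * \<alpha> ^ 3"
  define A2 where "A2 = - (\<alpha> ^ 2)"
  define a1 where "a1 i = (if i < M then K3 * \<gamma> i else 0)" for i
  define a2 where "a2 i = (if i < M then A2 * \<gamma> i else 0)" for i
  define c1 where "c1 = (\<lambda>i j l. a1 i * dl 0 j * dl 1 l)"
  define c2 where "c2 = (\<lambda>i j l. a2 i * dl 1 j * dl 0 l)"
  define c where "c = (\<lambda>i j l. c1 i j l + c2 i j l)"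
  have bS1': "bounded_op S1" "bounded_op S2" "bounded_op P" using bS1[OF G] bS2[OF G] bP[OF G] by auto
  have op1: "poly3_op c1 M S1 S2 P y = (\<Sum>i<M. scaleC (K3 * \<gamma> i) ((S1 ^^ i) (P y)))"
    unfolding c1_def poly3_op_prod[OF bS1'(1) bS1'(2)]
    using M by (simp add: delta_sum_op1 a1_def trunc_sum_op[of M "\<lambda>i. K3 * \<gamma> i"])
  have op2: "poly3_op c2 M S1 S2 P y = (\<Sum>i<M. scaleC (A2 * \<gamma> i) ((S1 ^^ i) (S2 y)))"
    unfolding c2_def poly3_op_prod[OF bS1'(1) bS1'(2)]
    using M by (simp add: delta_sum_op1 a2_def trunc_sum_op[of M "\<lambda>i. A2 * \<gamma> i"])
  have opeq: "(\<Sum>i<M. scaleC (\<gamma> i) ((S1 ^^ i) (scaleC K3 (P y) + scaleC A2 (S2 y)))) = poly3_op c M S1 S2 P y"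
  proof -
    have "poly3_op c M S1 S2 P y = poly3_op c1 M S1 S2 P y + poly3_op c2 M S1 S2 P y"
      unfolding c_def by (rule poly3_op_add)
    also have "\<dots> = (\<Sum>i<M. scaleC (\<gamma> i) ((S1 ^^ i) (scaleC K3 (P y) + scaleC A2 (S2 y))))"
      unfolding op1 op2 sum.distrib[symmetric]
      by (rule sum.cong[OF refl]) (simp add: bop_add[OF bop_pow[OF bS1'(1)]] bop_sc[OF bop_pow[OF bS1'(1)]]
          scaleC_add_right scaleC_scaleC mult.commute)
    finally show ?thesis by simp
  qed
  have pz: "cmod (poly3 c M z) \<le> 1 + (3 * cmod \<alpha> / k) ^ M" if z: "z \<in> Gamma3" for z
  proof -
    obtain z1 z2 z3 where zz: "cmod z1 \<le> 1" "cmod z2 \<le> 1" "cmod z3 \<le> 1"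
      "z = (z1 + z2 + z3, z1 * z2 + z2 * z3 + z3 * z1, z1 * z2 * z3)"
      using z by (rule Gamma3_elim)
    define s1 where "s1 = z1 + z2 + z3"
    define s2 where "s2 = z1 * z2 + z2 * z3 + z3 * z1"
    define p where "p = z1 * z2 * z3"
    have s1b: "cmod s1 \<le> 3" using Gamma3_bd1[of s1 s2 p] z zz by (simp add: s1_def s2_def p_def)
    have pc: "poly3 c M z = (\<Sum>i<M. \<gamma> i * s1 ^ i) * (K3 * p + A2 * s2)"
    proof -
      have "poly3 c M z = poly3 c1 M z + poly3 c2 M z" unfolding c_def by (rule poly3_add)
      also have "poly3 c1 M z = (\<Sum>i<M. K3 * \<gamma> i * s1 ^ i) * p"
        unfolding c1_def zz(4) poly3_prod using M
        by (simp add: delta_sum1 a1_def trunc_sum[of M "\<lambda>i. K3 * \<gamma> i"] s1_def p_def)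
      also have "poly3 c2 M z = (\<Sum>i<M. A2 * \<gamma> i * s1 ^ i) * s2"
        unfolding c2_def zz(4) poly3_prod using M
        by (simp add: delta_sum1 a2_def trunc_sum[of M "\<lambda>i. A2 * \<gamma> i"] s1_def s2_def)
      finally show ?thesis
        by (simp add: sum_distrib_left sum_distrib_right algebra_simps sum.distrib[symmetric])
    qed
    have w: "cmod (\<alpha> * z1) \<le> 1" "cmod (\<alpha> * z2) \<le> 1" "cmod (\<alpha> * z3) \<le> 1"
      using zz al by (auto simp: norm_mult mult_le_one)
    have "P1 k (\<alpha> * z1) (\<alpha> * z2) (\<alpha> * z3)" by (rule P1_disc[OF k w])
    then have B: "cmod (K3 * p + A2 * s2) \<le> cmod (of_real k - \<alpha> * s1)"
      unfolding P1_def K3_def A2_def p_def s1_def s2_def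
      by (simp add: algebra_simps power2_eq_square power3_eq_cube)
    show ?thesis unfolding pc \<gamma>_def
      using geo_bound[OF k s1b al B] by simp
  qed
  have "norm (poly3_op c M S1 S2 P y) \<le> (1 + (3 * cmod \<alpha> / k) ^ M) * norm y"
    by (rule vN[OF G pz])
  then show ?thesis unfolding opeq[symmetric] \<gamma>_def K3_def A2_def .
qed


lemma inst2:
  assumes k: "k > 3" and M: "M \<ge> 1" and al: "cmod \<alpha> \<le> 1"
  shows "norm (\<Sum>i<M. scaleC ((\<alpha> ^ 2) ^ i / (of_real k) ^ (i + 1))
             ((S2 ^^ i) (scaleC (of_real k * \<alpha> ^ 3) (P y) + scaleC (- \<alpha>) (S1 y))))
         \<le> (1 + (3 * cmod (\<alpha> ^ 2) / k) ^ M) * norm y"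
proof -
  define \<gamma> where "\<gamma> i = (\<alpha> ^ 2) ^ i / (of_real k :: complex) ^ (i + 1)" for i
  define K3 where "K3 = (of_real k :: complex) * \<alpha> ^ 3"
  define A1 where "A1 = - \<alpha>"
  define a1 where "a1 i = (if i < M then K3 * \<gamma> i else 0)" for i
  define a2 where "a2 i = (if i < M then A1 * \<gamma> i else 0)" for i
  define c1 where "c1 = (\<lambda>i j l. dl 0 i * a1 j * dl 1 l)"
  define c2 where "c2 = (\<lambda>i j l. dl 1 i * a2 j * dl 0 l)"
  define c where "c = (\<lambda>i j l. c1 i j l + c2 i j l)"
  have bS1': "bounded_op S1" "bounded_op S2" "bounded_op P" using bS1[OF G] bS2[OF G] bP[OF G] by auto
  have op1: "poly3_op c1 M S1 S2 P y = (\<Sum>i<M. scaleC (K3 * \<gamma> i) ((S2 ^^ i) (P y)))"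
    unfolding c1_def poly3_op_prod[OF bS1'(1) bS1'(2)]
    using M by (simp add: delta_sum_op1 a1_def trunc_sum_op[of M "\<lambda>i. K3 * \<gamma> i"])
  have op2: "poly3_op c2 M S1 S2 P y = (\<Sum>i<M. scaleC (A1 * \<gamma> i) ((S2 ^^ i) (S1 y)))"
  proof -
    have "poly3_op c2 M S1 S2 P y = S1 (\<Sum>i<M. scaleC (A1 * \<gamma> i) ((S2 ^^ i) y))"
      unfolding c2_def poly3_op_prod[OF bS1'(1) bS1'(2)]
      using M by (simp add: delta_sum_op1 a2_def trunc_sum_op[of M "\<lambda>i. A1 * \<gamma> i"])
    also have "\<dots> = (\<Sum>i<M. scaleC (A1 * \<gamma> i) ((S2 ^^ i) (S1 y)))"
      by (simp add: bop_sum[OF bS1'(1)] bop_sc[OF bS1'(1)] comm_pow1[OF c12])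
    finally show ?thesis .
  qed
  have opeq: "(\<Sum>i<M. scaleC (\<gamma> i) ((S2 ^^ i) (scaleC K3 (P y) + scaleC A1 (S1 y)))) = poly3_op c M S1 S2 P y"
  proof -
    have "poly3_op c M S1 S2 P y = poly3_op c1 M S1 S2 P y + poly3_op c2 M S1 S2 P y"
      unfolding c_def by (rule poly3_op_add)
    also have "\<dots> = (\<Sum>i<M. scaleC (\<gamma> i) ((S2 ^^ i) (scaleC K3 (P y) + scaleC A1 (S1 y))))"
      unfolding op1 op2 sum.distrib[symmetric]
      by (rule sum.cong[OF refl]) (simp add: bop_add[OF bop_pow[OF bS1'(2)]] bop_sc[OF bop_pow[OF bS1'(2)]]
          scaleC_add_right scaleC_scaleC mult.commute)
    finally show ?thesis by simp
  qed
  have pz: "cmod (poly3 c M z) \<le> 1 + (3 * cmod (\<alpha> ^ 2) / k) ^ M" if z: "z \<in> Gamma3" for z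
  proof -
    obtain z1 z2 z3 where zz: "cmod z1 \<le> 1" "cmod z2 \<le> 1" "cmod z3 \<le> 1"
      "z = (z1 + z2 + z3, z1 * z2 + z2 * z3 + z3 * z1, z1 * z2 * z3)"
      using z by (rule Gamma3_elim)
    define s1 where "s1 = z1 + z2 + z3"
    define s2 where "s2 = z1 * z2 + z2 * z3 + z3 * z1"
    define p where "p = z1 * z2 * z3"
    have s2b: "cmod s2 \<le> 3" using Gamma3_bd2[of s1 s2 p] z zz by (simp add: s1_def s2_def p_def)
    have pc: "poly3 c M z = (\<Sum>i<M. \<gamma> i * s2 ^ i) * (K3 * p + A1 * s1)"
    proof -
      have "poly3 c M z = poly3 c1 M z + poly3 c2 M z" unfolding c_def by (rule poly3_add)
      also have "poly3 c1 M z = (\<Sum>i<M. K3 * \<gamma> i * s2 ^ i) * p"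
        unfolding c1_def zz(4) poly3_prod using M
        by (simp add: delta_sum1 a1_def trunc_sum[of M "\<lambda>i. K3 * \<gamma> i"] s2_def p_def)
      also have "poly3 c2 M z = s1 * (\<Sum>i<M. A1 * \<gamma> i * s2 ^ i)"
        unfolding c2_def zz(4) poly3_prod using M
        by (simp add: delta_sum1 a2_def trunc_sum[of M "\<lambda>i. A1 * \<gamma> i"] s1_def s2_def)
      finally show ?thesis
        by (simp add: sum_distrib_left sum_distrib_right algebra_simps sum.distrib[symmetric])
    qed
    have w: "cmod (\<alpha> * z1) \<le> 1" "cmod (\<alpha> * z2) \<le> 1" "cmod (\<alpha> * z3) \<le> 1"
      using zz al by (auto simp: norm_mult mult_le_one)
    have al2: "cmod (\<alpha> ^ 2) \<le> 1" using al by (simp add: norm_power power_le_one)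
    have "P2 k (\<alpha> * z1) (\<alpha> * z2) (\<alpha> * z3)" by (rule P2_disc[OF k w])
    then have B: "cmod (K3 * p + A1 * s1) \<le> cmod (of_real k - \<alpha> ^ 2 * s2)"
      unfolding P2_def K3_def A1_def p_def s1_def s2_def
      by (simp add: algebra_simps power2_eq_square power3_eq_cube)
    show ?thesis unfolding pc \<gamma>_def
      using geo_bound[OF k s2b al2 B] by simp
  qed
  have "norm (poly3_op c M S1 S2 P y) \<le> (1 + (3 * cmod (\<alpha> ^ 2) / k) ^ M) * norm y"
    by (rule vN[OF G pz])
  then show ?thesis unfolding opeq[symmetric] \<gamma>_def K3_def A1_def .
qed

lemma main1:
  assumes k: "k > 3" and al: "cmod \<alpha> \<le> 1"
  shows "norm (scaleC (of_real k) (scaleC (\<alpha> ^ 3) (P x)) - scaleC (\<alpha> ^ 2) (S2 x))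
       \<le> norm (scaleC (of_real k) x - scaleC \<alpha> (S1 x))"
proof -
  define B where "B y = scaleC (of_real k * \<alpha> ^ 3) (P y) + scaleC (- (\<alpha> ^ 2)) (S2 y)" for y
  have bB: "bounded_op B" unfolding B_def[abs_def]
    by (intro bop_plus bop_scale bP[OF G] bS2[OF G])
  have comm: "S1 \<circ> B = B \<circ> S1"
  proof
    fix y
    have "S1 (P y) = P (S1 y)" "S1 (S2 y) = S2 (S1 y)" using c1P c12 by (metis comp_apply)+
    then show "(S1 \<circ> B) y = (B \<circ> S1) y"
      by (simp add: B_def bop_add[OF bS1[OF G]] bop_sc[OF bS1[OF G]])
  qed
  have "norm (B x) \<le> norm (scaleC (of_real k) x - scaleC \<alpha> (S1 x))"
    by (rule core[OF bS1[OF G] bB comm normS1[OF G] al k]) (use inst1[OF k _ al] in \<open>simp add: B_def\<close>)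
  moreover have "B x = scaleC (of_real k) (scaleC (\<alpha> ^ 3) (P x)) - scaleC (\<alpha> ^ 2) (S2 x)"
    by (simp add: B_def scaleC_scaleC scaleC_minus_left)
  ultimately show ?thesis by simp
qed

lemma main2:
  assumes k: "k > 3" and al: "cmod \<alpha> \<le> 1"
  shows "norm (scaleC (of_real k) (scaleC (\<alpha> ^ 3) (P x)) - scaleC \<alpha> (S1 x))
       \<le> norm (scaleC (of_real k) x - scaleC (\<alpha> ^ 2) (S2 x))"
proof -
  define B where "B y = scaleC (of_real k * \<alpha> ^ 3) (P y) + scaleC (- \<alpha>) (S1 y)" for y
  have bB: "bounded_op B" unfolding B_def[abs_def]
    by (intro bop_plus bop_scale bP[OF G] bS1[OF G])
  have comm: "S2 \<circ> B = B \<circ> S2"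
  proof
    fix y
    have "S2 (P y) = P (S2 y)" "S2 (S1 y) = S1 (S2 y)" using c2P c12 by (metis comp_apply)+
    then show "(S2 \<circ> B) y = (B \<circ> S2) y"
      by (simp add: B_def bop_add[OF bS2[OF G]] bop_sc[OF bS2[OF G]])
  qed
  have al2: "cmod (\<alpha> ^ 2) \<le> 1" using al by (simp add: norm_power power_le_one)
  have "norm (B x) \<le> norm (scaleC (of_real k) x - scaleC (\<alpha> ^ 2) (S2 x))"
    by (rule core[OF bS2[OF G] bB comm normS2[OF G] al2 k]) (use inst2[OF k _ al] in \<open>simp add: B_def\<close>)
  moreover have "B x = scaleC (of_real k) (scaleC (\<alpha> ^ 3) (P x)) - scaleC \<alpha> (S1 x)"
    by (simp add: B_def scaleC_scaleC scaleC_minus_left)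
  ultimately show ?thesis by simp
qed

end

lemma op_comb_eq: "op_comb k T U = (\<lambda>x. scaleC k (T x) - U x)"
  by (rule ext) (simp add: op_comb_def)

lemma bop_op_comb: "bounded_op T \<Longrightarrow> bounded_op U \<Longrightarrow> bounded_op (op_comb k T U)"
  unfolding op_comb_eq by (intro bop_minus_op bop_scale)

lemma bop_scale_op: "bounded_op T \<Longrightarrow> bounded_op (scale_op a T)"
  unfolding scale_op_def[abs_def] by (rule bop_scale)

theorem proposition4p4:
  fixes S1 S2 P :: "'a::complex_hilbert \<Rightarrow> 'a"
    and \<alpha> :: complex and k :: real
  assumes "gamma3_contraction S1 S2 P"
    and "cmod \<alpha> \<le> 1"
    and "k \<ge> 3"
  shows "positive_op (Phi1 k (scale_op \<alpha> S1) (scale_op (\<alpha>^2) S2) (scale_op (\<alpha>^3) P))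
       \<and> positive_op (Phi2 k (scale_op \<alpha> S1) (scale_op (\<alpha>^2) S2) (scale_op (\<alpha>^3) P))"
proof
  note G = assms(1) and al = assms(2) and k = assms(3)
  have b1: "bounded_op (scale_op \<alpha> S1)" "bounded_op (scale_op (\<alpha>^2) S2)" "bounded_op (scale_op (\<alpha>^3) P)"
    using bS1[OF G] bS2[OF G] bP[OF G] by (auto intro: bop_scale_op)
  show "positive_op (Phi1 k (scale_op \<alpha> S1) (scale_op (\<alpha>^2) S2) (scale_op (\<alpha>^3) P))"
  proof -
    have e: "Phi1 k (scale_op \<alpha> S1) (scale_op (\<alpha>^2) S2) (scale_op (\<alpha>^3) P) =
      (\<lambda>x. adj (op_comb (of_real k) id (scale_op \<alpha> S1)) (op_comb (of_real k) id (scale_op \<alpha> S1) x)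
         - adj (op_comb (of_real k) (scale_op (\<alpha>^3) P) (scale_op (\<alpha>^2) S2)) (op_comb (of_real k) (scale_op (\<alpha>^3) P) (scale_op (\<alpha>^2) S2) x))"
      by (rule ext) (simp add: Phi1_def)
    show ?thesis unfolding e
    proof (rule pos_from_norm)
      show "bounded_op (op_comb (of_real k) id (scale_op \<alpha> S1))" by (intro bop_op_comb bop_id b1)
      show "bounded_op (op_comb (of_real k) (scale_op (\<alpha>^3) P) (scale_op (\<alpha>^2) S2))" by (intro bop_op_comb b1)
      fix x
      show "norm (op_comb (of_real k) (scale_op (\<alpha>^3) P) (scale_op (\<alpha>^2) S2) x)
          \<le> norm (op_comb (of_real k) id (scale_op \<alpha> S1) x)"
        unfolding op_comb_def scale_op_def id_def
        by (rule eps_arg[OF _ k]) (rule main1[OF G _ al])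
    qed
  qed
  show "positive_op (Phi2 k (scale_op \<alpha> S1) (scale_op (\<alpha>^2) S2) (scale_op (\<alpha>^3) P))"
  proof -
    have e: "Phi2 k (scale_op \<alpha> S1) (scale_op (\<alpha>^2) S2) (scale_op (\<alpha>^3) P) =
      (\<lambda>x. adj (op_comb (of_real k) id (scale_op (\<alpha>^2) S2)) (op_comb (of_real k) id (scale_op (\<alpha>^2) S2) x)
         - adj (op_comb (of_real k) (scale_op (\<alpha>^3) P) (scale_op \<alpha> S1)) (op_comb (of_real k) (scale_op (\<alpha>^3) P) (scale_op \<alpha> S1) x))"
      by (rule ext) (simp add: Phi2_def)
    show ?thesis unfolding e
    proof (rule pos_from_norm)
      show "bounded_op (op_comb (of_real k) id (scale_op (\<alpha>^2) S2))" by (intro bop_op_comb bop_id b1)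
      show "bounded_op (op_comb (of_real k) (scale_op (\<alpha>^3) P) (scale_op \<alpha> S1))" by (intro bop_op_comb b1)
      fix x
      show "norm (op_comb (of_real k) (scale_op (\<alpha>^3) P) (scale_op \<alpha> S1) x)
          \<le> norm (op_comb (of_real k) id (scale_op (\<alpha>^2) S2) x)"
        unfolding op_comb_def scale_op_def id_def
        by (rule eps_arg[OF _ k]) (rule main2[OF G _ al])
    qed
  qed
qed


end
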